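(* Let $f\in C([0,1])$ with $f>0$, $\lambda>0$, $H_\lambda=\{a\in C([0,1]):a>\lambda \text{ on }[0,1]\}$, and $F(a)(x)=\int_0^x \frac{\int_0^z f(s)ds}{a(z)}dz$. Let $W\subset C([0,1])$ be a finite-dimensional subspace, $K\subset W\cap H_\lambda$ compact and convex, and $(Q_N)_{N\in\mathbb{N}}$ a sequence of bounded finite-rank operators $Q_N:C([0,1])\to C([0,1])$ converging strongly to the identity. Then there exist $D\in\mathbb{N}$ and $C>0$ such that $\|a_1-a_2\|_\infty\le C\|Q_D(F(a_1))-Q_D(F(a_2))\|_\infty$ for all $a_1,a_2\in K$.
   Context: $C([0,1])$ carries the supremum norm $\|\cdot\|_\infty$. *)

theory Defs
  imports "HOL-Analysis.Analysis"
begin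

text \<open>Elements of C([0,1]) are represented by functions real => real that are
continuous on {0..1}; only their values on {0..1} matter.\<close>

definition C01 :: "(real \<Rightarrow> real) set" where
  "C01 = {g. continuous_on {0..1} g}"

definition supn :: "(real \<Rightarrow> real) \<Rightarrow> real" where
  "supn g = (SUP x\<in>{0..1}. \<bar>g x\<bar>)"

definition eq01 :: "(real \<Rightarrow> real) \<Rightarrow> (real \<Rightarrow> real) \<Rightarrow> bool" where
  "eq01 g h \<longleftrightarrow> (\<forall>x\<in>{0..1}. g x = h x)"

definition bounded_finite_rank_op :: "((real \<Rightarrow> real) \<Rightarrow> (real \<Rightarrow> real)) \<Rightarrow> bool" where
  "bounded_finite_rank_op Q \<longleftrightarrow>
     (\<forall>g\<in>C01. Q g \<in> C01) \<and>
     (\<forall>g\<in>C01. \<forall>h\<in>C01. eq01 g h \<longrightarrow> eq01 (Q g) (Q h)) \<and>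
     (\<forall>g\<in>C01. \<forall>h\<in>C01. eq01 (Q (\<lambda>x. g x + h x)) (\<lambda>x. Q g x + Q h x)) \<and>
     (\<forall>g\<in>C01. \<forall>c::real. eq01 (Q (\<lambda>x. c * g x)) (\<lambda>x. c * Q g x)) \<and>
     (\<exists>B. \<forall>g\<in>C01. supn (Q g) \<le> B * supn g) \<and>
     (\<exists>S. finite S \<and> S \<subseteq> C01 \<and>
        (\<forall>g\<in>C01. \<exists>c. eq01 (Q g) (\<lambda>x. \<Sum>s\<in>S. c s * s x)))"

definition fin_dim_subspace :: "(real \<Rightarrow> real) set \<Rightarrow> bool" where
  "fin_dim_subspace W \<longleftrightarrow>
     W \<subseteq> C01 \<and> (\<lambda>x. 0) \<in> W \<and>
     (\<forall>g\<in>W. \<forall>h\<in>W. (\<lambda>x. g x + h x) \<in> W) \<and>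
     (\<forall>g\<in>W. \<forall>c::real. (\<lambda>x. c * g x) \<in> W) \<and>
     (\<exists>S. finite S \<and> S \<subseteq> W \<and> (\<forall>w\<in>W. \<exists>c. eq01 w (\<lambda>x. \<Sum>s\<in>S. c s * s x)))"

definition sup_compact :: "(real \<Rightarrow> real) set \<Rightarrow> bool" where
  "sup_compact K \<longleftrightarrow>
     (\<forall>s::nat \<Rightarrow> real \<Rightarrow> real. (\<forall>n. s n \<in> K) \<longrightarrow>
        (\<exists>a\<in>K. \<exists>r::nat \<Rightarrow> nat. strict_mono r \<and>
           (\<lambda>n. supn (\<lambda>x. s (r n) x - a x)) \<longlonglongrightarrow> 0))"

definition fconvex :: "(real \<Rightarrow> real) set \<Rightarrow> bool" where
  "fconvex K \<longleftrightarrow> (\<forall>a\<in>K. \<forall>b\<in>K. \<forall>t\<in>{0..1::real}. (\<lambda>x. t * a x + (1 - t) * b x) \<in> K)"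

definition H :: "real \<Rightarrow> (real \<Rightarrow> real) set" where
  "H lam = {a\<in>C01. \<forall>x\<in>{0..1}. a x > lam}"

definition Fop :: "(real \<Rightarrow> real) \<Rightarrow> (real \<Rightarrow> real) \<Rightarrow> (real \<Rightarrow> real)" where
  "Fop f a = (\<lambda>x. integral {0..x} (\<lambda>z. integral {0..z} f / a z))"

end

theory Submission
  imports Defs
begin


lemma supn_ge_bdd:
  fixes g :: "real \<Rightarrow> real"
  assumes "\<And>x. x \<in> {0..1} \<Longrightarrow> \<bar>g x\<bar> \<le> B" "x \<in> {0..1::real}"
  shows "\<bar>g x\<bar> \<le> supn g"
  unfolding supn_def
  by (rule cSUP_upper[OF assms(2)]) (use assms(1) in \<open>auto intro!: bdd_aboveI2[where M=B]\<close>)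

lemma cont_bdd:
  fixes g :: "real \<Rightarrow> real"
  assumes "continuous_on {0..1::real} g"
  obtains B where "\<And>x. x \<in> {0..1} \<Longrightarrow> \<bar>g x\<bar> \<le> B"
proof -
  have "compact (g ` {0..1})" by (rule compact_continuous_image[OF assms]) auto
  then obtain B where "\<forall>y\<in>g ` {0..1}. norm y \<le> B" using compact_imp_bounded bounded_iff by metis
  then show ?thesis by (intro that[of B]) auto
qed

lemma supn_ge:
  fixes g :: "real \<Rightarrow> real"
  assumes "continuous_on {0..1::real} g" "x \<in> {0..1}"
  shows "\<bar>g x\<bar> \<le> supn g"
  using cont_bdd[OF assms(1)] supn_ge_bdd assms(2) by metis

lemma supn_le:
  fixes g :: "real \<Rightarrow> real"
  assumes "\<And>x. x \<in> {0..1::real} \<Longrightarrow> \<bar>g x\<bar> \<le> b"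
  shows "supn g \<le> b"
  unfolding supn_def by (rule cSUP_least) (use assms in auto)

lemma supn_nonneg: "continuous_on {0..1::real} (g::real\<Rightarrow>real) \<Longrightarrow> 0 \<le> supn g"
  using supn_ge[of g 0] by force
lemma supn_nonneg_old: "continuous_on {0..1::real} g \<Longrightarrow> 0 \<le> supn g"
  using supn_ge[of g 0] by force

lemma supn_cong: "(\<And>x. x \<in> {0..1::real} \<Longrightarrow> g x = h x) \<Longrightarrow> supn g = supn h"
  unfolding supn_def by (rule SUP_cong) auto

lemma supn_eq01: "eq01 g h \<Longrightarrow> supn g = supn h"
  unfolding eq01_def by (rule supn_cong) auto

lemma supn_le_sum:
  fixes g h1 h2 :: "real \<Rightarrow> real"
  assumes "\<And>x. x \<in> {0..1::real} \<Longrightarrow> \<bar>g x\<bar> \<le> \<bar>h1 x\<bar> + \<bar>h2 x\<bar>"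
    "continuous_on {0..1} h1" "continuous_on {0..1} h2"
  shows "supn g \<le> supn h1 + supn h2"
proof (rule supn_le)
  fix x :: real assume x: "x \<in> {0..1}"
  have "\<bar>h1 x\<bar> \<le> supn h1" "\<bar>h2 x\<bar> \<le> supn h2" using supn_ge assms(2,3) x by auto
  then show "\<bar>g x\<bar> \<le> supn h1 + supn h2" using assms(1)[OF x] by linarith
qed

lemma supn_mono:
  fixes g h :: "real \<Rightarrow> real"
  assumes "\<And>x. x \<in> {0..1::real} \<Longrightarrow> \<bar>g x\<bar> \<le> \<bar>h x\<bar>" "continuous_on {0..1} h"
  shows "supn g \<le> supn h"
proof (rule supn_le)
  fix x :: real assume x: "x \<in> {0..1}"
  have "\<bar>h x\<bar> \<le> supn h" using supn_ge assms(2) x by auto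
  then show "\<bar>g x\<bar> \<le> supn h" using assms(1)[OF x] by linarith
qed

lemma supn_zero_const: "supn (\<lambda>x. 0) = 0"
  unfolding supn_def by simp

lemma supn_cmult:
  fixes g :: "real \<Rightarrow> real"
  assumes "continuous_on {0..1::real} g"
  shows "supn (\<lambda>x. c * g x) = \<bar>c\<bar> * supn g"
proof (rule antisym)
  show "supn (\<lambda>x. c * g x) \<le> \<bar>c\<bar> * supn g"
    by (rule supn_le) (auto simp: abs_mult intro!: mult_left_mono supn_ge assms)
next
  show "\<bar>c\<bar> * supn g \<le> supn (\<lambda>x. c * g x)"
  proof (cases "c = 0")
    case True then show ?thesis by (simp add: supn_zero_const)
  next
    case False
    have "supn g \<le> supn (\<lambda>x. c * g x) / \<bar>c\<bar>"
    proof (rule supn_le)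
      fix x :: real assume "x \<in> {0..1}"
      then have "\<bar>c * g x\<bar> \<le> supn (\<lambda>x. c * g x)"
        by (intro supn_ge continuous_intros assms)
      then show "\<bar>g x\<bar> \<le> supn (\<lambda>x. c * g x) / \<bar>c\<bar>"
        using False by (simp add: abs_mult field_simps)
    qed
    then show ?thesis using False by (simp add: field_simps)
  qed
qed

lemma supn_zero:
  fixes g :: "real \<Rightarrow> real"
  assumes "continuous_on {0..1::real} g" "supn g = 0" "x \<in> {0..1}"
  shows "g x = 0"
  using supn_ge[OF assms(1,3)] assms(2) by simp

lemma supn_ul:
  fixes g :: "nat \<Rightarrow> real \<Rightarrow> real"
  assumes "\<And>n. continuous_on {0..1::real} (\<lambda>x. g n x - l x)"
    "(\<lambda>n. supn (\<lambda>x. g n x - l x)) \<longlonglongrightarrow> 0"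
  shows "uniform_limit {0..1} g l sequentially"
proof (rule uniform_limitI)
  fix e :: real assume "e > 0"
  then have "\<forall>\<^sub>F n in sequentially. supn (\<lambda>x. g n x - l x) < e"
    using assms(2) order_tendstoD(2) by blast
  then show "\<forall>\<^sub>F n in sequentially. \<forall>x\<in>{0..1}. dist (g n x) (l x) < e"
  proof (rule eventually_mono)
    fix n assume "supn (\<lambda>x. g n x - l x) < e"
    then show "\<forall>x\<in>{0..1}. dist (g n x) (l x) < e"
      using supn_ge[OF assms(1)[of n]] by (force simp: dist_real_def)
  qed
qed

lemma ul_supn:
  fixes g :: "nat \<Rightarrow> real \<Rightarrow> real"
  assumes "uniform_limit {0..1::real} g l sequentially"
  shows "(\<lambda>n. supn (\<lambda>x. g n x - l x)) \<longlonglongrightarrow> 0"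
proof (rule LIMSEQ_I)
  fix e :: real assume "e > 0"
  then have "\<forall>\<^sub>F n in sequentially. \<forall>x\<in>{0..1}. dist (g n x) (l x) < e/2"
    using uniform_limitD[OF assms, of "e/2"] \<open>e>0\<close> by simp
  then obtain N where N: "\<And>n x. n \<ge> N \<Longrightarrow> x \<in> {0..1} \<Longrightarrow> \<bar>g n x - l x\<bar> < e/2"
    unfolding eventually_sequentially dist_real_def by blast
  show "\<exists>N. \<forall>n\<ge>N. norm (supn (\<lambda>x. g n x - l x) - 0) < e"
  proof (intro exI allI impI)
    fix n assume "n \<ge> N"
    have le: "supn (\<lambda>x. g n x - l x) \<le> e/2" by (rule supn_le) (use N \<open>n\<ge>N\<close> in force)
    have "\<bar>g n 0 - l 0\<bar> \<le> supn (\<lambda>x. g n x - l x)"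
      by (rule supn_ge_bdd[where B="e/2"]) (use N \<open>n\<ge>N\<close> in force)+
    then show "norm (supn (\<lambda>x. g n x - l x) - 0) < e" using le \<open>e>0\<close> by auto
  qed
qed



lemma C01_cont: "g \<in> C01 \<Longrightarrow> continuous_on {0..1} g"
  by (simp add: C01_def)

lemma C01_I: "continuous_on {0..1} g \<Longrightarrow> g \<in> C01"
  by (simp add: C01_def)

context
  fixes Q :: "(real \<Rightarrow> real) \<Rightarrow> (real \<Rightarrow> real)"
  assumes Q: "bounded_finite_rank_op Q"
begin

lemma Q_C01: "g \<in> C01 \<Longrightarrow> Q g \<in> C01"
  using Q unfolding bounded_finite_rank_op_def by blast

lemma Q_cont: "g \<in> C01 \<Longrightarrow> continuous_on {0..1} (Q g)"
  using Q_C01 C01_cont by blast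

lemma Q_eq: "g \<in> C01 \<Longrightarrow> h \<in> C01 \<Longrightarrow> eq01 g h \<Longrightarrow> eq01 (Q g) (Q h)"
  using Q unfolding bounded_finite_rank_op_def by blast

lemma Q_add: "g \<in> C01 \<Longrightarrow> h \<in> C01 \<Longrightarrow> eq01 (Q (\<lambda>x. g x + h x)) (\<lambda>x. Q g x + Q h x)"
  using Q unfolding bounded_finite_rank_op_def by blast

lemma Q_scale: "g \<in> C01 \<Longrightarrow> eq01 (Q (\<lambda>x. c * g x)) (\<lambda>x. c * Q g x)"
  using Q unfolding bounded_finite_rank_op_def by blast

lemma Q_diff:
  assumes "g \<in> C01" "h \<in> C01"
  shows "eq01 (Q (\<lambda>x. g x - h x)) (\<lambda>x. Q g x - Q h x)"
proof -
  have h': "(\<lambda>x. (-1) * h x) \<in> C01"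
    using assms by (auto simp: C01_def intro!: continuous_intros)
  have "eq01 (Q (\<lambda>x. g x + (-1) * h x)) (\<lambda>x. Q g x + Q (\<lambda>x. (-1) * h x) x)"
    using Q_add[OF assms(1) h'] by simp
  moreover have "eq01 (Q (\<lambda>x. (-1) * h x)) (\<lambda>x. (-1) * Q h x)"
    using Q_scale[OF assms(2)] .
  ultimately show ?thesis by (simp add: eq01_def)
qed

lemma Q_bound: "\<exists>B\<ge>0. \<forall>g\<in>C01. supn (Q g) \<le> B * supn g"
proof -
  obtain B where B: "\<forall>g\<in>C01. supn (Q g) \<le> B * supn g"
    using Q unfolding bounded_finite_rank_op_def by blast
  show ?thesis
  proof (intro exI[of _ "max B 0"] conjI ballI)
    fix g assume g: "g \<in> C01"
    have "B * supn g \<le> max B 0 * supn g"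
      by (intro mult_right_mono supn_nonneg C01_cont g) auto
    then show "supn (Q g) \<le> max B 0 * supn g" using B g by force
  qed auto
qed

lemma Q_lip:
  obtains B where "B \<ge> 0" "\<And>g h. g \<in> C01 \<Longrightarrow> h \<in> C01 \<Longrightarrow> supn (\<lambda>x. Q g x - Q h x) \<le> B * supn (\<lambda>x. g x - h x)"
proof -
  obtain B where B: "B \<ge> 0" "\<forall>g\<in>C01. supn (Q g) \<le> B * supn g" using Q_bound by blast
  have "supn (\<lambda>x. Q g x - Q h x) \<le> B * supn (\<lambda>x. g x - h x)" if assms: "g \<in> C01" "h \<in> C01" for g h
  proof -
    have gh: "(\<lambda>x. g x - h x) \<in> C01" using assms by (auto simp: C01_def intro!: continuous_intros)
    have "supn (\<lambda>x. Q g x - Q h x) = supn (Q (\<lambda>x. g x - h x))"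
      using Q_diff[OF assms] by (simp add: supn_eq01 eq01_def)
    also have "\<dots> \<le> B * supn (\<lambda>x. g x - h x)" using B gh by blast
    finally show ?thesis .
  qed
  then show ?thesis using that B by blast
qed

end



lemma BS:
  fixes Q :: "nat \<Rightarrow> (real \<Rightarrow> real) \<Rightarrow> (real \<Rightarrow> real)"
  assumes Q: "\<forall>N. bounded_finite_rank_op (Q N)"
    and conv: "\<forall>g\<in>C01. (\<lambda>N. supn (\<lambda>x. Q N g x - g x)) \<longlonglongrightarrow> 0"
  shows "\<exists>B. \<forall>N. \<forall>g\<in>C01. supn (Q N g) \<le> B * supn g"
proof -
  define \<phi> where "\<phi> N v = supn (Q N (apply_bcontfun v))" for N and v :: "real \<Rightarrow>\<^sub>C real"
  have app: "apply_bcontfun v \<in> C01" for v :: "real \<Rightarrow>\<^sub>C real"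
    by (rule C01_I) simp
  have supn_dist: "supn (\<lambda>x. apply_bcontfun v x - apply_bcontfun w x) \<le> dist v w"
    for v w :: "real \<Rightarrow>\<^sub>C real"
    by (rule supn_le) (metis dist_bounded dist_real_def)
  have cont: "continuous_on UNIV (\<phi> N)" for N
  proof -
    obtain B where B: "B \<ge> 0" "\<And>g h. g \<in> C01 \<Longrightarrow> h \<in> C01 \<Longrightarrow>
        supn (\<lambda>x. Q N g x - Q N h x) \<le> B * supn (\<lambda>x. g x - h x)"
      using Q_lip[OF Q[rule_format, of N]] by blast
    have lip: "\<bar>\<phi> N v - \<phi> N w\<bar> \<le> B * dist v w" for v w
    proof -
      have cv: "continuous_on {0..1} (Q N (apply_bcontfun v))" "continuous_on {0..1} (Q N (apply_bcontfun w))"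
        using Q_cont[OF Q[rule_format, of N] app] by auto
      have cd: "continuous_on {0..1} (\<lambda>x. Q N (apply_bcontfun v) x - Q N (apply_bcontfun w) x)"
        by (intro continuous_intros cv)
      have cd': "continuous_on {0..1} (\<lambda>x. Q N (apply_bcontfun w) x - Q N (apply_bcontfun v) x)"
        by (intro continuous_intros cv)
      have 1: "\<phi> N v \<le> supn (\<lambda>x. Q N (apply_bcontfun v) x - Q N (apply_bcontfun w) x) + \<phi> N w"
        unfolding \<phi>_def by (rule supn_le_sum[OF _ cd cv(2)]) auto
      have 2: "\<phi> N w \<le> supn (\<lambda>x. Q N (apply_bcontfun w) x - Q N (apply_bcontfun v) x) + \<phi> N v"
        unfolding \<phi>_def by (rule supn_le_sum[OF _ cd' cv(1)]) auto
      have 3: "supn (\<lambda>x. Q N (apply_bcontfun v) x - Q N (apply_bcontfun w) x) \<le> B * dist v w"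
        using order_trans[OF B(2)[OF app app] mult_left_mono[OF supn_dist B(1)]] .
      have 4: "supn (\<lambda>x. Q N (apply_bcontfun w) x - Q N (apply_bcontfun v) x) \<le> B * dist v w"
        using order_trans[OF B(2)[OF app app] mult_left_mono[OF supn_dist B(1)], of w v] by (simp add: dist_commute)
      show ?thesis using 1 2 3 4 by linarith
    qed
    show ?thesis unfolding continuous_on_iff
    proof (intro ballI allI impI)
      fix v :: "real \<Rightarrow>\<^sub>C real" and e :: real assume "e > 0"
      show "\<exists>d>0. \<forall>x'\<in>UNIV. dist x' v < d \<longrightarrow> dist (\<phi> N x') (\<phi> N v) < e"
      proof (intro exI[of _ "e/(B+1)"] conjI ballI impI)
        show "e/(B+1) > 0" using \<open>e>0\<close> B(1) by simp
        fix w assume "dist w v < e/(B+1)"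
        then have "B * dist w v \<le> B * (e/(B+1))" using B(1) by (intro mult_left_mono) simp_all
        also have "\<dots> < e" using \<open>e>0\<close> B(1) by (simp add: field_simps)
        finally show "dist (\<phi> N w) (\<phi> N v) < e" using lip[of w v] by (simp add: dist_real_def)
      qed
    qed
  qed
  define A where "A M = {v. \<forall>N. \<phi> N v \<le> real M}" for M :: nat
  have closedA: "closed (A M)" for M
    unfolding A_def by (intro closed_Collect_all closed_Collect_le cont continuous_on_const)
  have cover: "UNIV \<subseteq> \<Union>(range A)"
  proof
    fix v :: "real \<Rightarrow>\<^sub>C real"
    let ?g = "apply_bcontfun v"
    have "convergent (\<lambda>N. supn (\<lambda>x. Q N ?g x - ?g x))"
      using conv app by (auto simp: convergent_def)
    then obtain K where K: "\<And>N. norm (supn (\<lambda>x. Q N ?g x - ?g x)) \<le> K"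
      using convergent_imp_Bseq[OF \<open>convergent _\<close>] unfolding Bseq_def by blast
    have "\<phi> N v \<le> K + supn ?g" for N
    proof -
      have "\<phi> N v \<le> supn (\<lambda>x. Q N ?g x - ?g x) + supn ?g"
        unfolding \<phi>_def
        by (rule supn_le_sum) (auto intro!: continuous_intros Q_cont[OF Q[rule_format, of N] app])
      then show ?thesis using K[of N] by simp
    qed
    then have "v \<in> A (nat \<lceil>K + supn ?g\<rceil>)"
      unfolding A_def using order_trans[OF _ real_nat_ceiling_ge] by blast
    then show "v \<in> \<Union>(range A)" by blast
  qed
  have "\<exists>M. interior (A M) \<noteq> {}"
  proof (rule ccontr)
    assume "\<not> ?thesis"
    then have "euclidean interior_of \<Union>(range A) = {}"
      by (intro Baire_category_alt) (auto simp: completely_metrizable_space_euclidean closedA)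
    moreover have "\<Union>(range A) = UNIV" using cover by blast
    ultimately show False by simp
  qed
  then obtain M v0 where "v0 \<in> interior (A M)" by blast
  then obtain r where r: "r > 0" "ball v0 r \<subseteq> A M" using mem_interior by blast
  have v0A: "v0 \<in> A M" using r by auto
  show ?thesis
  proof (intro exI[of _ "4 * real M / r"] allI ballI)
    fix N g assume g: "g \<in> C01"
    note QN = Q[rule_format, of N]
    have gc: "continuous_on {0..1} g" using g C01_cont by blast
    show "supn (Q N g) \<le> 4 * real M / r * supn g"
    proof (cases "supn g = 0")
      case True
      have "eq01 g (\<lambda>x. 0 * g x)" using supn_zero[OF gc True] by (simp add: eq01_def)
      then have "eq01 (Q N g) (Q N (\<lambda>x. 0 * g x))"
        using Q_eq[OF QN g] by (simp add: C01_def)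
      moreover have "eq01 (Q N (\<lambda>x. 0 * g x)) (\<lambda>x. 0 * Q N g x)" using Q_scale[OF QN g] .
      ultimately have "supn (Q N g) = supn (\<lambda>x. 0::real)"
        by (intro supn_cong) (auto simp: eq01_def)
      then show ?thesis using True by (simp add: supn_zero_const)
    next
      case False
      then have s: "supn g > 0" using supn_nonneg[OF gc] by simp
      define t where "t = r / (2 * supn g)"
      have t: "t > 0" using s r by (simp add: t_def)
      define w where "w = (\<lambda>x. t * g x)"
      have wC: "w \<in> C01" using gc by (auto simp: w_def C01_def intro!: continuous_intros)
      have wc: "continuous_on (cbox 0 1) w" using wC by (simp add: C01_def cbox_interval)
      obtain ew :: "real \<Rightarrow>\<^sub>C real" where ew1: "\<And>x. x \<in> cbox 0 1 \<Longrightarrow> ew x = w x"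
        and ew2: "\<And>x. ew x = w (clamp 0 1 x)"
        using continuous_on_cbox_bcontfunE[OF wc] by metis
      have wb: "\<bar>w x\<bar> \<le> r / 2" if "x \<in> {0..1}" for x
      proof -
        have "\<bar>w x\<bar> = t * \<bar>g x\<bar>" using t by (simp add: w_def abs_mult)
        also have "\<dots> \<le> t * supn g" using supn_ge[OF gc that] t by (simp add: mult_left_mono)
        also have "\<dots> = r / 2" using s by (simp add: t_def)
        finally show ?thesis .
      qed
      have "norm ew \<le> r / 2"
      proof (rule norm_bound)
        fix x
        have "clamp 0 1 x \<in> cbox (0::real) 1" by (rule clamp_in_interval) simp
        then show "norm (ew x) \<le> r / 2" using ew2 wb by (simp add: cbox_interval)
      qed
      then have "v0 + ew \<in> ball v0 r" using r by (simp add: dist_norm)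
      then have vA: "v0 + ew \<in> A M" using r by blast
      have b1: "supn (Q N (apply_bcontfun (v0 + ew))) \<le> real M" using vA by (simp add: A_def \<phi>_def)
      have b2: "supn (Q N (apply_bcontfun v0)) \<le> real M" using v0A by (simp add: A_def \<phi>_def)
      have e1: "eq01 (Q N (apply_bcontfun (v0 + ew))) (\<lambda>x. Q N v0 x + Q N ew x)"
        using Q_add[OF QN app app, of v0 ew] by (simp add: plus_bcontfun.rep_eq)
      have e2: "eq01 (Q N ew) (Q N w)"
        using Q_eq[OF QN app wC, of ew] ew1 by (simp add: eq01_def cbox_interval)
      have e3: "eq01 (Q N w) (\<lambda>x. t * Q N g x)" using Q_scale[OF QN g] by (simp add: w_def)
      have "t * supn (Q N g) = supn (\<lambda>x. t * Q N g x)"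
        using supn_cmult[OF Q_cont[OF QN g], of t] t by simp
      also have "\<dots> = supn (Q N ew)" using e2 e3 by (intro supn_cong) (auto simp: eq01_def)
      also have "\<dots> \<le> supn (Q N (apply_bcontfun (v0 + ew))) + supn (Q N (apply_bcontfun v0))"
      proof (rule supn_le_sum[OF _ Q_cont[OF QN app] Q_cont[OF QN app]])
        fix x :: real assume x: "x \<in> {0..1}"
        have "Q N (apply_bcontfun (v0 + ew)) x = Q N v0 x + Q N ew x" using e1 x by (simp add: eq01_def)
        then show "\<bar>Q N ew x\<bar> \<le> \<bar>Q N (apply_bcontfun (v0 + ew)) x\<bar> + \<bar>Q N v0 x\<bar>" by arith
      qed
      also have "\<dots> \<le> 2 * real M" using b1 b2 by simp
      finally have "supn (Q N g) \<le> 2 * real M / t" using t by (simp add: field_simps)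
      also have "\<dots> = 4 * real M / r * supn g" using s r by (simp add: t_def field_simps)
      finally show ?thesis .
    qed
  qed
qed



lemma cont_sum: "S \<subseteq> C01 \<Longrightarrow> continuous_on {0..1} (\<lambda>x. \<Sum>s\<in>S. c s * s x)"
  by (intro continuous_on_sum continuous_intros) (auto simp: C01_def)

lemma fd_compact:
  fixes cs :: "nat \<Rightarrow> (real \<Rightarrow> real) \<Rightarrow> real" and S :: "(real \<Rightarrow> real) set"
  assumes "finite S"
  shows "S \<subseteq> C01 \<Longrightarrow> (\<And>n. supn (\<lambda>x. \<Sum>s\<in>S. cs n s * s x) \<le> M) \<Longrightarrow>
     \<exists>r c. strict_mono r \<and>
       (\<lambda>n. supn (\<lambda>x. (\<Sum>s\<in>S. cs (r n) s * s x) - (\<Sum>s\<in>S. c s * s x))) \<longlonglongrightarrow> 0"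
  using assms
proof (induction S arbitrary: cs M rule: finite_induct)
  case empty
  show ?case
  proof -
    have "strict_mono (id::nat\<Rightarrow>nat)" by (simp add: strict_mono_def)
    then show ?thesis by (simp add: supn_zero_const) blast
  qed
next
  case (insert s S)
  have sC: "s \<in> C01" and SC: "S \<subseteq> C01" using insert.prems by auto
  have sc: "continuous_on {0..1} s" using sC by (simp add: C01_def)
  have sumins: "(\<Sum>u\<in>insert s S. c u * u x) = c s * s x + (\<Sum>u\<in>S. c u * u x)" for c x
    using insert.hyps by (simp add: sum.insert)
  have Mnn: "M \<ge> 0"
    using supn_nonneg[OF cont_sum[OF insert.prems(1)]] insert.prems(2) order_trans by blast
  have bins: "\<bar>\<Sum>u\<in>insert s S. cs n u * u x\<bar> \<le> M" if "x \<in> {0..1}" for n x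
    using supn_ge[OF cont_sum[OF insert.prems(1), of "cs n"] that] insert.prems(2)[of n] by linarith
  show ?case
  proof (cases "\<exists>B. \<forall>n. \<bar>cs n s\<bar> \<le> B")
    case True
    then obtain B where B: "\<And>n. \<bar>cs n s\<bar> \<le> B" by blast
    have "bounded (range (\<lambda>n. cs n s))" using B unfolding bounded_iff by auto
    then obtain c0 r1 where r1: "strict_mono r1" and c0: "((\<lambda>n. cs n s) \<circ> r1) \<longlonglongrightarrow> c0"
      using bounded_imp_convergent_subsequence by blast
    have bS: "supn (\<lambda>x. \<Sum>u\<in>S. cs (r1 n) u * u x) \<le> M + B * supn s" for n
    proof (rule supn_le)
      fix x :: real assume x: "x \<in> {0..1}"
      have "\<bar>cs (r1 n) s * s x\<bar> \<le> B * supn s"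
        unfolding abs_mult by (intro mult_mono B supn_ge sc x) (use B[of n] in auto)
      then show "\<bar>\<Sum>u\<in>S. cs (r1 n) u * u x\<bar> \<le> M + B * supn s"
        using bins[OF x, of "r1 n"] sumins[of "cs (r1 n)" x] by linarith
    qed
    obtain r2 d where r2: "strict_mono r2" and d:
      "(\<lambda>n. supn (\<lambda>x. (\<Sum>u\<in>S. cs (r1 (r2 n)) u * u x) - (\<Sum>u\<in>S. d u * u x))) \<longlonglongrightarrow> 0"
      using insert.IH[where cs="\<lambda>n. cs (r1 n)", OF SC bS] by blast
    define c where "c = d(s := c0)"
    have csum: "(\<Sum>u\<in>S. c u * u x) = (\<Sum>u\<in>S. d u * u x)" for x
      unfolding c_def using insert.hyps by (intro sum.cong) auto
    have cs: "c s = c0" by (simp add: c_def)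
    let ?D = "\<lambda>n. (\<lambda>x. (\<Sum>u\<in>S. cs (r1 (r2 n)) u * u x) - (\<Sum>u\<in>S. d u * u x))"
    have cD: "continuous_on {0..1} (?D n)" for n
      by (intro continuous_intros cont_sum SC)
    have up: "supn (\<lambda>x. (\<Sum>u\<in>insert s S. cs (r1 (r2 n)) u * u x) - (\<Sum>u\<in>insert s S. c u * u x))
        \<le> \<bar>cs (r1 (r2 n)) s - c0\<bar> * supn s + supn (?D n)" for n
    proof (rule supn_le)
      fix x :: real assume x: "x \<in> {0..1}"
      have "\<bar>(cs (r1 (r2 n)) s - c0) * s x\<bar> \<le> \<bar>cs (r1 (r2 n)) s - c0\<bar> * supn s"
        unfolding abs_mult by (intro mult_left_mono supn_ge sc x) auto
      moreover have "\<bar>?D n x\<bar> \<le> supn (?D n)" by (rule supn_ge[OF cD x])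
      moreover have "(\<Sum>u\<in>insert s S. cs (r1 (r2 n)) u * u x) - (\<Sum>u\<in>insert s S. c u * u x)
          = (cs (r1 (r2 n)) s - c0) * s x + ?D n x"
        unfolding sumins csum cs by (simp add: algebra_simps)
      ultimately show "\<bar>(\<Sum>u\<in>insert s S. cs (r1 (r2 n)) u * u x) - (\<Sum>u\<in>insert s S. c u * u x)\<bar>
          \<le> \<bar>cs (r1 (r2 n)) s - c0\<bar> * supn s + supn (?D n)" by linarith
    qed
    have lo: "0 \<le> supn (\<lambda>x. (\<Sum>u\<in>insert s S. cs (r1 (r2 n)) u * u x) - (\<Sum>u\<in>insert s S. c u * u x))" for n
      by (intro supn_nonneg continuous_intros cont_sum insert.prems(1))
    have c0': "(\<lambda>n. cs (r1 (r2 n)) s) \<longlonglongrightarrow> c0"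
      using LIMSEQ_subseq_LIMSEQ[OF c0 r2] by (simp add: o_def)
    have "(\<lambda>n. \<bar>cs (r1 (r2 n)) s - c0\<bar> * supn s + supn (?D n)) \<longlonglongrightarrow> \<bar>c0 - c0\<bar> * supn s + 0"
      by (intro tendsto_intros c0' d)
    then have hi: "(\<lambda>n. \<bar>cs (r1 (r2 n)) s - c0\<bar> * supn s + supn (?D n)) \<longlonglongrightarrow> 0" by simp
    have "(\<lambda>n. supn (\<lambda>x. (\<Sum>u\<in>insert s S. cs (r1 (r2 n)) u * u x) - (\<Sum>u\<in>insert s S. c u * u x))) \<longlonglongrightarrow> 0"
      by (rule real_tendsto_sandwich[OF _ _ tendsto_const hi]) (use lo up in auto)
    moreover have "strict_mono (r1 \<circ> r2)" using r1 r2 by (rule strict_mono_o)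
    ultimately show ?thesis by (intro exI[of _ "r1 \<circ> r2"] exI[of _ c]) (simp add: o_def)
  next
    case False
    then have "\<forall>j::nat. \<exists>n. real j + 1 < \<bar>cs n s\<bar>" by (meson not_le)
    then obtain nj where nj: "\<And>j. real j + 1 < \<bar>cs (nj j) s\<bar>" by metis
    define t where "t j = cs (nj j) s" for j
    have tnz: "t j \<noteq> 0" "\<bar>t j\<bar> \<ge> 1" "\<bar>t j\<bar> > real j + 1" for j using nj[of j] by (auto simp: t_def)
    define ks where "ks j u = cs (nj j) u / t j" for j u
    have ksum: "(\<Sum>u\<in>S. ks j u * u x) = (\<Sum>u\<in>insert s S. cs (nj j) u * u x) / t j - s x" for j x
    proof -
      have "(\<Sum>u\<in>S. ks j u * u x) = (\<Sum>u\<in>S. cs (nj j) u * u x) / t j"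
        unfolding ks_def sum_divide_distrib by (intro sum.cong) auto
      also have "\<dots> = (\<Sum>u\<in>insert s S. cs (nj j) u * u x) / t j - s x"
        unfolding sumins using tnz(1)[of j] by (simp add: t_def field_simps)
      finally show ?thesis .
    qed
    have bq: "\<bar>(\<Sum>u\<in>insert s S. cs (nj j) u * u x) / t j\<bar> \<le> M / \<bar>t j\<bar>" if "x \<in> {0..1}" for j x
      using bins[OF that, of "nj j"] tnz[of j] by (simp add: abs_divide divide_right_mono)
    have bS: "supn (\<lambda>x. \<Sum>u\<in>S. ks j u * u x) \<le> M + supn s" for j
    proof (rule supn_le)
      fix x :: real assume x: "x \<in> {0..1}"
      have "M / \<bar>t j\<bar> \<le> M" using Mnn tnz(2)[of j] by (simp add: divide_le_eq mult_le_cancel_left1 mult_le_cancel_left2)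
      then show "\<bar>\<Sum>u\<in>S. ks j u * u x\<bar> \<le> M + supn s"
        using bq[OF x, of j] supn_ge[OF sc x] unfolding ksum by linarith
    qed
    obtain r2 d where r2: "strict_mono r2" and d:
      "(\<lambda>n. supn (\<lambda>x. (\<Sum>u\<in>S. ks (r2 n) u * u x) - (\<Sum>u\<in>S. d u * u x))) \<longlonglongrightarrow> 0"
      using insert.IH[where cs=ks, OF SC bS] by blast
    let ?D = "\<lambda>n. (\<lambda>x. (\<Sum>u\<in>S. ks (r2 n) u * u x) - (\<Sum>u\<in>S. d u * u x))"
    have cD: "continuous_on {0..1} (?D n)" for n
      by (intro continuous_intros cont_sum SC)
    have up: "supn (\<lambda>x. s x + (\<Sum>u\<in>S. d u * u x)) \<le> M / (real n + 1) + supn (?D n)" for n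
    proof (rule supn_le)
      fix x :: real assume x: "x \<in> {0..1}"
      have "r2 n \<ge> n" using seq_suble[OF r2] by blast
      then have "real (r2 n) + 1 \<ge> real n + 1" by simp
      then have "M / \<bar>t (r2 n)\<bar> \<le> M / (real n + 1)"
        using tnz(3)[of "r2 n"] Mnn by (intro divide_left_mono) auto
      moreover have "\<bar>?D n x\<bar> \<le> supn (?D n)" by (rule supn_ge[OF cD x])
      moreover have "s x + (\<Sum>u\<in>S. d u * u x) = (\<Sum>u\<in>insert s S. cs (nj (r2 n)) u * u x) / t (r2 n) - ?D n x"
        unfolding ksum by simp
      ultimately show "\<bar>s x + (\<Sum>u\<in>S. d u * u x)\<bar> \<le> M / (real n + 1) + supn (?D n)"
        using bq[OF x, of "r2 n"] by linarith
    qed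
    have "(\<lambda>n. M / real (Suc n)) \<longlonglongrightarrow> 0"
      by (rule LIMSEQ_Suc) (rule lim_const_over_n)
    then have "(\<lambda>n. M / (real n + 1)) \<longlonglongrightarrow> 0" by (simp add: add.commute)
    then have "(\<lambda>n. M / (real n + 1) + supn (?D n)) \<longlonglongrightarrow> 0 + 0"
      by (intro tendsto_add d)
    then have "supn (\<lambda>x. s x + (\<Sum>u\<in>S. d u * u x)) \<le> 0"
      using up by (intro LIMSEQ_le_const[of _ 0]) auto
    then have s0: "supn (\<lambda>x. s x + (\<Sum>u\<in>S. d u * u x)) = 0"
      using supn_nonneg[of "\<lambda>x. s x + (\<Sum>u\<in>S. d u * u x)"] by (simp add: cont_sum SC sc continuous_on_add)
    have sx: "s x = - (\<Sum>u\<in>S. d u * u x)" if "x \<in> {0..1}" for x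
      using supn_zero[OF _ s0 that] by (simp add: cont_sum SC sc continuous_on_add)
    define cs' where "cs' n u = cs n u - cs n s * d u" for n u
    have eqs: "(\<Sum>u\<in>insert s S. cs n u * u x) = (\<Sum>u\<in>S. cs' n u * u x)" if "x \<in> {0..1}" for n x
    proof -
      have "(\<Sum>u\<in>S. cs' n u * u x) = (\<Sum>u\<in>S. cs n u * u x - cs n s * (d u * u x))"
        unfolding cs'_def by (intro sum.cong) (auto simp: algebra_simps)
      also have "\<dots> = (\<Sum>u\<in>S. cs n u * u x) - cs n s * (\<Sum>u\<in>S. d u * u x)"
        by (simp only: sum_subtractf sum_distrib_left)
      also have "\<dots> = cs n s * s x + (\<Sum>u\<in>S. cs n u * u x)" using sx[OF that] by simp
      finally show ?thesis unfolding sumins by simp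
    qed
    have bS': "supn (\<lambda>x. \<Sum>u\<in>S. cs' n u * u x) \<le> M" for n
    proof -
      have "supn (\<lambda>x. \<Sum>u\<in>S. cs' n u * u x) = supn (\<lambda>x. \<Sum>u\<in>insert s S. cs n u * u x)"
        by (rule supn_cong) (simp add: eqs)
      then show ?thesis using insert.prems(2)[of n] by simp
    qed
    obtain r c' where r: "strict_mono r" and c':
      "(\<lambda>n. supn (\<lambda>x. (\<Sum>u\<in>S. cs' (r n) u * u x) - (\<Sum>u\<in>S. c' u * u x))) \<longlonglongrightarrow> 0"
      using insert.IH[where cs=cs', OF SC bS'] by blast
    define c where "c = c'(s := 0)"
    have csum: "(\<Sum>u\<in>insert s S. c u * u x) = (\<Sum>u\<in>S. c' u * u x)" for x
      unfolding sumins c_def using insert.hyps by (auto intro!: sum.cong)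
    have "(\<lambda>n. supn (\<lambda>x. (\<Sum>u\<in>insert s S. cs (r n) u * u x) - (\<Sum>u\<in>insert s S. c u * u x)))
        = (\<lambda>n. supn (\<lambda>x. (\<Sum>u\<in>S. cs' (r n) u * u x) - (\<Sum>u\<in>S. c' u * u x)))"
      by (intro ext supn_cong) (simp add: eqs csum)
    then show ?thesis using r c' by (intro exI[of _ r] exI[of _ c]) simp
  qed
qed



lemma int_cont: "continuous_on {0..1::real} \<psi> \<Longrightarrow> continuous_on {0..1} (\<lambda>x. integral {0..x} \<psi>)"
  for \<psi> :: "real \<Rightarrow> real"
  by (intro indefinite_integral_continuous_1 integrable_continuous_real)

lemma int_integrable: "continuous_on {0..1::real} \<psi> \<Longrightarrow> x \<in> {0..1} \<Longrightarrow> \<psi> integrable_on {0..x}"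
  for \<psi> :: "real \<Rightarrow> real"
  by (intro integrable_continuous_real) (auto elim!: continuous_on_subset)

lemma ul_int:
  fixes \<psi> :: "nat \<Rightarrow> real \<Rightarrow> real"
  assumes c: "\<And>j. continuous_on {0..1} (\<psi> j)" and c': "continuous_on {0..1} \<psi>'"
    and u: "uniform_limit {0..1} \<psi> \<psi>' sequentially"
  shows "uniform_limit {0..1} (\<lambda>j x. integral {0..x} (\<psi> j)) (\<lambda>x. integral {0..x} \<psi>') sequentially"
proof (rule uniform_limitI)
  fix e :: real assume e: "e > 0"
  have "\<forall>\<^sub>F j in sequentially. \<forall>z\<in>{0..1}. dist (\<psi> j z) (\<psi>' z) < e/2"
    using uniform_limitD[OF u, of "e/2"] e by simp
  then show "\<forall>\<^sub>F j in sequentially. \<forall>x\<in>{0..1}. dist (integral {0..x} (\<psi> j)) (integral {0..x} \<psi>') < e"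
  proof (rule eventually_mono, intro ballI)
    fix j x assume b: "\<forall>z\<in>{0..1}. dist (\<psi> j z) (\<psi>' z) < e/2" and x: "(x::real) \<in> {0..1}"
    have "integral {0..x} (\<psi> j) - integral {0..x} \<psi>' = integral {0..x} (\<lambda>z. \<psi> j z - \<psi>' z)"
      using int_integrable[OF c x] int_integrable[OF c' x] by (simp add: integral_diff)
    also have "norm \<dots> \<le> e/2 * (x - 0)"
    proof (rule integral_bound)
      show "0 \<le> x" using x by simp
      show "continuous_on {0..x} (\<lambda>z. \<psi> j z - \<psi>' z)"
        using x by (intro continuous_intros) (auto intro: continuous_on_subset[OF c] continuous_on_subset[OF c'])
      fix z assume "z \<in> {0..x}"
      then have "z \<in> {0..1}" using x by auto
      then have "dist (\<psi> j z) (\<psi>' z) < e/2" using b by blast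
      then show "norm (\<psi> j z - \<psi>' z) \<le> e/2" by (simp add: dist_real_def)
    qed
    also have "\<dots> < e" using x e by (auto intro: mult_left_le_one_le)
    finally show "dist (integral {0..x} (\<psi> j)) (integral {0..x} \<psi>') < e"
      by (simp add: dist_real_def)
  qed
qed

lemma int_zero:
  fixes \<psi> :: "real \<Rightarrow> real"
  assumes c: "continuous_on {0..1} \<psi>" and z: "\<And>x. x \<in> {0..1} \<Longrightarrow> integral {0..x} \<psi> = 0"
    and x: "x \<in> {0..1}"
  shows "\<psi> x = 0"
proof -
  have d1: "((\<lambda>u. integral {0..u} \<psi>) has_vector_derivative \<psi> x) (at x within cbox 0 1)"
    using integral_has_vector_derivative[OF c x] by (simp add: cbox_interval)
  have d0: "((\<lambda>u. 0) has_vector_derivative 0) (at x within cbox 0 1)" by simp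
  have d2: "((\<lambda>u. integral {0..u} \<psi>) has_vector_derivative 0) (at x within cbox 0 1)"
    by (rule has_vector_derivative_transform[OF _ _ d0]) (use x z in \<open>auto simp: cbox_interval\<close>)
  show ?thesis
    using vector_derivative_unique_within_closed_interval[of 0 1 x, OF _ _ d1 d2] x
    by (simp add: cbox_interval)
qed

lemma G_pos:
  fixes f :: "real \<Rightarrow> real"
  assumes fc: "continuous_on {0..1} f" and fp: "\<forall>x\<in>{0..1}. f x > 0" and x: "x \<in> {0<..1}"
  shows "integral {0..x} f > 0"
proof -
  obtain xm where xm: "xm \<in> {0..1}" "\<And>y. y \<in> {0..1} \<Longrightarrow> f xm \<le> f y"
    using continuous_attains_inf[OF compact_Icc _ fc] by auto
  have m: "f xm > 0" using fp xm by auto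
  have "integral {0..x} (\<lambda>_. f xm) \<le> integral {0..x} f"
    by (rule integral_le) (use x xm int_integrable[OF fc, of x] in auto)
  moreover have "integral {0..x} (\<lambda>_. f xm) = x * f xm" using x by simp
  moreover have "x * f xm > 0" using x m by simp
  ultimately show ?thesis by linarith
qed



theorem mainTheorem8:
  fixes f :: "real \<Rightarrow> real" and lam :: real
    and W K :: "(real \<Rightarrow> real) set"
    and Q :: "nat \<Rightarrow> (real \<Rightarrow> real) \<Rightarrow> (real \<Rightarrow> real)"
  assumes "f \<in> C01" and "\<forall>x\<in>{0..1}. f x > 0" and "lam > 0"
    and "fin_dim_subspace W"
    and "K \<subseteq> W \<inter> H lam" and "sup_compact K" and "fconvex K"
    and "\<forall>N. bounded_finite_rank_op (Q N)"
    and "\<forall>g\<in>C01. (\<lambda>N. supn (\<lambda>x. Q N g x - g x)) \<longlonglongrightarrow> 0"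
  shows "\<exists>D::nat. \<exists>C>0. \<forall>a1\<in>K. \<forall>a2\<in>K.
           supn (\<lambda>x. a1 x - a2 x) \<le> C * supn (\<lambda>x. Q D (Fop f a1) x - Q D (Fop f a2) x)"
proof -
  note fC = assms(1) and fpos = assms(2) and lam = assms(3) and Wd = assms(4)
    and KWH = assms(5) and Kc = assms(6) and Qop = assms(8) and conv = assms(9)
  have fc: "continuous_on {0..1} f" using fC by (simp add: C01_def)
  define G where "G z = integral {0..z} f" for z
  have Gc: "continuous_on {0..1} G" unfolding G_def by (rule int_cont[OF fc])
  have Gpos: "G x > 0" if "x \<in> {0<..1}" for x unfolding G_def by (rule G_pos[OF fc fpos that])
  have KC: "a \<in> C01" if "a \<in> K" for a using KWH that by (auto simp: H_def)
  have Kc': "continuous_on {0..1} a" if "a \<in> K" for a using KC[OF that] by (simp add: C01_def)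
  have Klam: "a x > lam" if "a \<in> K" "x \<in> {0..1}" for a x using KWH that by (auto simp: H_def)
  have KW: "a \<in> W" if "a \<in> K" for a using KWH that by auto
  have Fop_eq: "Fop f a = (\<lambda>x. integral {0..x} (\<lambda>z. G z / a z))" for a
    by (simp add: Fop_def G_def)
  have qc: "continuous_on {0..1} (\<lambda>z. G z / a z)" if "a \<in> K" for a
    using Klam[OF that] lam by (intro continuous_intros Gc Kc'[OF that]) force
  have FC: "Fop f a \<in> C01" if "a \<in> K" for a
    unfolding Fop_eq C01_def using int_cont[OF qc[OF that]] by simp
  obtain SW where SW: "finite SW" "SW \<subseteq> W" "\<And>w. w \<in> W \<Longrightarrow> \<exists>c. eq01 w (\<lambda>x. \<Sum>s\<in>SW. c s * s x)"
    using Wd unfolding fin_dim_subspace_def by blast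
  have WC: "W \<subseteq> C01" using Wd unfolding fin_dim_subspace_def by blast
  have SWC: "SW \<subseteq> C01" using SW WC by blast
  have Wadd: "(\<lambda>x. g x + h x) \<in> W" if "g \<in> W" "h \<in> W" for g h
    using Wd that unfolding fin_dim_subspace_def by blast
  have Wscale: "(\<lambda>x. c * g x) \<in> W" if "g \<in> W" for g c
    using Wd that unfolding fin_dim_subspace_def by blast
  obtain B0 where B0: "\<And>N g. g \<in> C01 \<Longrightarrow> supn (Q N g) \<le> B0 * supn g"
    using BS[OF Qop conv] by blast
  show ?thesis
  proof (rule ccontr)
    assume neg: "\<not> ?thesis"
    have "\<exists>a1 a2. a1 \<in> K \<and> a2 \<in> K \<and>
        (real n + 1) * supn (\<lambda>x. Q n (Fop f a1) x - Q n (Fop f a2) x) < supn (\<lambda>x. a1 x - a2 x)" for n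
    proof (rule ccontr)
      assume "\<not> ?thesis"
      then have "\<forall>a1\<in>K. \<forall>a2\<in>K. supn (\<lambda>x. a1 x - a2 x) \<le> (real n + 1) * supn (\<lambda>x. Q n (Fop f a1) x - Q n (Fop f a2) x)"
        by (auto simp: not_less)
      then have "\<exists>D::nat. \<exists>C>0. \<forall>a1\<in>K. \<forall>a2\<in>K.
           supn (\<lambda>x. a1 x - a2 x) \<le> C * supn (\<lambda>x. Q D (Fop f a1) x - Q D (Fop f a2) x)"
        by (intro exI[of _ n] exI[of _ "real n + 1"]) auto
      then show False using neg by blast
    qed
    then obtain A1 A2 where AK: "\<And>n. A1 n \<in> K" "\<And>n. A2 n \<in> K" and Aineq: "\<And>n.
        (real n + 1) * supn (\<lambda>x. Q n (Fop f (A1 n)) x - Q n (Fop f (A2 n)) x) < supn (\<lambda>x. A1 n x - A2 n x)"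
      by metis
    define \<delta> where "\<delta> n = supn (\<lambda>x. A1 n x - A2 n x)" for n
    have QFc: "continuous_on {0..1} (\<lambda>x. Q n (Fop f (A1 n)) x - Q n (Fop f (A2 n)) x)" for n
      by (intro continuous_intros Q_cont[OF Qop[rule_format] FC] AK)
    have \<delta>pos: "\<delta> n > 0" for n
    proof -
      have "0 \<le> (real n + 1) * supn (\<lambda>x. Q n (Fop f (A1 n)) x - Q n (Fop f (A2 n)) x)"
        using supn_nonneg[OF QFc[of n]] by simp
      then show ?thesis using Aineq[of n] by (simp add: \<delta>_def)
    qed
    define h where "h n = (\<lambda>z. (1 / \<delta> n) * (A1 n z + (-1) * A2 n z))" for n
    have hW: "h n \<in> W" for n
      unfolding h_def by (intro Wscale Wadd KW AK)
    have hc: "continuous_on {0..1} (h n)" for n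
      unfolding h_def by (intro continuous_intros Kc' AK)
    have Adc: "continuous_on {0..1} (\<lambda>z. A1 n z + (-1) * A2 n z)" for n
      by (intro continuous_intros Kc' AK)
    have hs: "supn (h n) = 1" for n
    proof -
      have "supn (h n) = \<bar>1 / \<delta> n\<bar> * supn (\<lambda>z. A1 n z + (-1) * A2 n z)"
        unfolding h_def by (rule supn_cmult[OF Adc])
      also have "supn (\<lambda>z. A1 n z + (-1) * A2 n z) = \<delta> n" by (simp add: \<delta>_def)
      finally show ?thesis using \<delta>pos[of n] by simp
    qed
    obtain hcf where hcf: "\<And>n. eq01 (h n) (\<lambda>x. \<Sum>s\<in>SW. hcf n s * s x)"
      using SW(3)[OF hW] by metis
    have hcfb: "supn (\<lambda>x. \<Sum>s\<in>SW. hcf n s * s x) \<le> 1" for n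
      using supn_eq01[OF hcf[of n]] hs[of n] by simp
    obtain a1 r1 where a1: "a1 \<in> K" and r1: "strict_mono r1"
      and c1: "(\<lambda>n. supn (\<lambda>x. A1 (r1 n) x - a1 x)) \<longlonglongrightarrow> 0"
      using Kc AK(1) unfolding sup_compact_def by blast
    obtain a2 r2 where a2: "a2 \<in> K" and r2: "strict_mono r2"
      and c2: "(\<lambda>n. supn (\<lambda>x. A2 (r1 (r2 n)) x - a2 x)) \<longlonglongrightarrow> 0"
      using Kc AK(2) unfolding sup_compact_def
      by (drule_tac x="\<lambda>n. A2 (r1 n)" in spec) auto
    obtain r3 hinf where r3: "strict_mono r3"
      and c3': "(\<lambda>n. supn (\<lambda>x. (\<Sum>s\<in>SW. hcf (r1 (r2 (r3 n))) s * s x) - (\<Sum>s\<in>SW. hinf s * s x))) \<longlonglongrightarrow> 0"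
      using fd_compact[OF SW(1) SWC, of "\<lambda>n. hcf (r1 (r2 n))" 1] hcfb by blast
    define \<rho> where "\<rho> j = r1 (r2 (r3 j))" for j
    have \<rho>: "strict_mono \<rho>" unfolding \<rho>_def using r1 r2 r3 by (simp add: strict_mono_def)
    define H where "H x = (\<Sum>s\<in>SW. hinf s * s x)" for x
    have Hc: "continuous_on {0..1} H" unfolding H_def by (rule cont_sum[OF SWC])
    have c1': "(\<lambda>j. supn (\<lambda>x. A1 (\<rho> j) x - a1 x)) \<longlonglongrightarrow> 0"
    proof -
      have "strict_mono (r2 \<circ> r3)" using r2 r3 by (rule strict_mono_o)
      from LIMSEQ_subseq_LIMSEQ[OF c1 this] show ?thesis by (simp add: \<rho>_def o_def)
    qed
    have c2': "(\<lambda>j. supn (\<lambda>x. A2 (\<rho> j) x - a2 x)) \<longlonglongrightarrow> 0"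
      using LIMSEQ_subseq_LIMSEQ[OF c2 r3] by (simp add: \<rho>_def o_def)
    have c3: "(\<lambda>j. supn (\<lambda>x. h (\<rho> j) x - H x)) \<longlonglongrightarrow> 0"
    proof -
      have "(\<lambda>j. supn (\<lambda>x. h (\<rho> j) x - H x)) =
            (\<lambda>n. supn (\<lambda>x. (\<Sum>s\<in>SW. hcf (r1 (r2 (r3 n))) s * s x) - (\<Sum>s\<in>SW. hinf s * s x)))"
        using hcf by (intro ext supn_cong) (simp add: eq01_def \<rho>_def H_def)
      then show ?thesis using c3' by simp
    qed
    have U1: "uniform_limit {0..1} (\<lambda>j. A1 (\<rho> j)) a1 sequentially"
      by (rule supn_ul[OF _ c1']) (intro continuous_intros Kc' AK a1)
    have U2: "uniform_limit {0..1} (\<lambda>j. A2 (\<rho> j)) a2 sequentially"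
      by (rule supn_ul[OF _ c2']) (intro continuous_intros Kc' AK a2)
    have U3: "uniform_limit {0..1} (\<lambda>j. h (\<rho> j)) H sequentially"
      by (rule supn_ul[OF _ c3]) (intro continuous_intros hc Hc)
    have bnd: "bounded (g ` {0..1})" if "continuous_on {0..1} g" for g :: "real \<Rightarrow> real"
      by (rule compact_imp_bounded[OF compact_continuous_image[OF that compact_Icc]])
    have UGh: "uniform_limit {0..1} (\<lambda>j z. G z * h (\<rho> j) z) (\<lambda>z. G z * H z) sequentially"
      using uniform_lim_mult[OF uniform_limit_const[where S="{0..1}" and c=G and f=sequentially] U3 bnd[OF Gc] bnd[OF Hc]] by simp
    have UA: "uniform_limit {0..1} (\<lambda>j z. A1 (\<rho> j) z * A2 (\<rho> j) z) (\<lambda>z. a1 z * a2 z) sequentially"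
      by (rule uniform_lim_mult[OF U1 U2 bnd bnd]) (intro Kc' a1 a2)+
    have lb: "lam * lam \<le> norm (a1 z * a2 z)" if "z \<in> {0..1}" for z
    proof -
      have "lam * lam \<le> a1 z * a2 z"
        using Klam[OF a1 that] Klam[OF a2 that] lam by (intro mult_mono) auto
      then show ?thesis by simp
    qed
    define \<psi> where "\<psi> j z = - (G z * h (\<rho> j) z / (A1 (\<rho> j) z * A2 (\<rho> j) z))" for j z
    define \<psi>' where "\<psi>' z = - (G z * H z / (a1 z * a2 z))" for z
    have U\<psi>: "uniform_limit {0..1} \<psi> \<psi>' sequentially"
      using uniform_limit_uminus[OF uniform_lim_divide[OF UGh UA bnd[of "\<lambda>z. G z * H z"] lb]] lam
      unfolding \<psi>_def[abs_def] \<psi>'_def[abs_def]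
      by (simp add: continuous_on_mult Gc Hc)
    have nz: "A1 (\<rho> j) z \<noteq> 0" "A2 (\<rho> j) z \<noteq> 0" "a1 z \<noteq> 0" "a2 z \<noteq> 0" if "z \<in> {0..1}" for j z
      using Klam[OF AK(1)[of "\<rho> j"] that] Klam[OF AK(2)[of "\<rho> j"] that] Klam[OF a1 that] Klam[OF a2 that] lam
      by auto
    have \<psi>c: "continuous_on {0..1} (\<psi> j)" for j
      unfolding \<psi>_def using nz
      by (intro continuous_intros Gc hc Kc' AK) auto
    have \<psi>'c: "continuous_on {0..1} \<psi>'"
      unfolding \<psi>'_def using nz
      by (intro continuous_intros Gc Hc Kc' a1 a2) auto
    define v where "v j = (\<lambda>x. (1 / \<delta> (\<rho> j)) * (Fop f (A1 (\<rho> j)) x - Fop f (A2 (\<rho> j)) x))" for j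
    define v' where "v' x = integral {0..x} \<psi>'" for x
    have v'C: "v' \<in> C01" unfolding v'_def C01_def using int_cont[OF \<psi>'c] by simp
    have vC: "v j \<in> C01" for j
      unfolding v_def C01_def mem_Collect_eq
      by (intro continuous_intros) (use FC[OF AK(1)] FC[OF AK(2)] in \<open>auto simp: C01_def\<close>)
    have v_int: "v j x = integral {0..x} (\<psi> j)" if x: "x \<in> {0..1}" for j x
    proof -
      have "Fop f (A1 (\<rho> j)) x - Fop f (A2 (\<rho> j)) x
          = integral {0..x} (\<lambda>z. G z / A1 (\<rho> j) z - G z / A2 (\<rho> j) z)"
        unfolding Fop_eq using int_integrable[OF qc[OF AK(1)] x] int_integrable[OF qc[OF AK(2)] x]
        by (simp add: integral_diff)
      then have "v j x = integral {0..x} (\<lambda>z. (1 / \<delta> (\<rho> j)) * (G z / A1 (\<rho> j) z - G z / A2 (\<rho> j) z))"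
        unfolding v_def by simp
      also have "\<dots> = integral {0..x} (\<psi> j)"
      proof (rule integral_cong)
        fix z assume "z \<in> {0..x}"
        then have z: "z \<in> {0..1}" using x by auto
        show "(1 / \<delta> (\<rho> j)) * (G z / A1 (\<rho> j) z - G z / A2 (\<rho> j) z) = \<psi> j z"
          unfolding \<psi>_def h_def using nz[OF z] \<delta>pos[of "\<rho> j"] by (simp add: field_simps)
      qed
      finally show ?thesis .
    qed
    have cv: "(\<lambda>j. supn (\<lambda>x. v j x - v' x)) \<longlonglongrightarrow> 0"
    proof -
      have "(\<lambda>j. supn (\<lambda>x. integral {0..x} (\<psi> j) - v' x)) \<longlonglongrightarrow> 0"
        unfolding v'_def by (rule ul_supn[OF ul_int[OF \<psi>c \<psi>'c U\<psi>]])
      moreover have "(\<lambda>j. supn (\<lambda>x. v j x - v' x)) = (\<lambda>j. supn (\<lambda>x. integral {0..x} (\<psi> j) - v' x))"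
        by (intro ext supn_cong) (simp add: v_int)
      ultimately show ?thesis by simp
    qed
    have Qv: "supn (Q (\<rho> j) (v j)) \<le> 1 / (real j + 1)" for j
    proof -
      let ?n = "\<rho> j"
      let ?g = "\<lambda>x. Fop f (A1 ?n) x - Fop f (A2 ?n) x"
      have gC: "?g \<in> C01" using FC[OF AK(1)] FC[OF AK(2)] by (auto simp: C01_def intro!: continuous_intros)
      note Qn = Qop[rule_format, of ?n]
      have "eq01 (Q ?n (v j)) (\<lambda>x. (1 / \<delta> ?n) * Q ?n ?g x)"
        unfolding v_def by (rule Q_scale[OF Qn gC])
      moreover have "eq01 (Q ?n ?g) (\<lambda>x. Q ?n (Fop f (A1 ?n)) x - Q ?n (Fop f (A2 ?n)) x)"
        by (rule Q_diff[OF Qn FC[OF AK(1)] FC[OF AK(2)]])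
      ultimately have "supn (Q ?n (v j)) = supn (\<lambda>x. (1 / \<delta> ?n) * (Q ?n (Fop f (A1 ?n)) x - Q ?n (Fop f (A2 ?n)) x))"
        by (intro supn_cong) (simp add: eq01_def)
      also have "\<dots> = (1 / \<delta> ?n) * supn (\<lambda>x. Q ?n (Fop f (A1 ?n)) x - Q ?n (Fop f (A2 ?n)) x)"
        using supn_cmult[OF QFc[of ?n], of "1 / \<delta> ?n"] \<delta>pos[of ?n] by simp
      also have "\<dots> \<le> 1 / (real ?n + 1)"
        using Aineq[of ?n] \<delta>pos[of ?n] by (simp add: \<delta>_def field_simps)
      also have "\<dots> \<le> 1 / (real j + 1)"
        using seq_suble[OF \<rho>, of j] by (simp add: frac_le)
      finally show ?thesis .
    qed
    have cQ: "(\<lambda>j. supn (\<lambda>x. Q (\<rho> j) v' x - v' x)) \<longlonglongrightarrow> 0"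
      using LIMSEQ_subseq_LIMSEQ[OF conv[rule_format, OF v'C] \<rho>] by (simp add: o_def)
    have v'c: "continuous_on {0..1} v'" using v'C by (simp add: C01_def)
    have up: "supn v' \<le> supn (\<lambda>x. Q (\<rho> j) v' x - v' x) + B0 * supn (\<lambda>x. v j x - v' x) + 1 / (real j + 1)" for j
    proof -
      note Qn = Qop[rule_format, of "\<rho> j"]
      have Qvc: "continuous_on {0..1} (Q (\<rho> j) (v j))" "continuous_on {0..1} (Q (\<rho> j) v')"
        using Q_cont[OF Qn vC] Q_cont[OF Qn v'C] by auto
      have dC: "(\<lambda>x. v j x - v' x) \<in> C01" using vC v'C by (auto simp: C01_def intro!: continuous_intros)
      have e: "eq01 (Q (\<rho> j) (\<lambda>x. v j x - v' x)) (\<lambda>x. Q (\<rho> j) (v j) x - Q (\<rho> j) v' x)"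
        by (rule Q_diff[OF Qn vC v'C])
      have "supn (\<lambda>x. Q (\<rho> j) (v j) x - Q (\<rho> j) v' x) = supn (Q (\<rho> j) (\<lambda>x. v j x - v' x))"
        using supn_eq01[OF e] by simp
      also have "\<dots> \<le> B0 * supn (\<lambda>x. v j x - v' x)" by (rule B0[OF dC])
      finally have b2: "supn (\<lambda>x. Q (\<rho> j) (v j) x - Q (\<rho> j) v' x) \<le> B0 * supn (\<lambda>x. v j x - v' x)" .
      have "supn v' \<le> supn (\<lambda>x. Q (\<rho> j) v' x - v' x) + supn (\<lambda>x. Q (\<rho> j) (v j) x - Q (\<rho> j) v' x) + supn (Q (\<rho> j) (v j))"
      proof (rule supn_le)
        fix x :: real assume x: "x \<in> {0..1}"
        have "\<bar>Q (\<rho> j) v' x - v' x\<bar> \<le> supn (\<lambda>x. Q (\<rho> j) v' x - v' x)"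
          by (rule supn_ge[OF _ x]) (intro continuous_intros Qvc v'c)
        moreover have "\<bar>Q (\<rho> j) (v j) x - Q (\<rho> j) v' x\<bar> \<le> supn (\<lambda>x. Q (\<rho> j) (v j) x - Q (\<rho> j) v' x)"
          by (rule supn_ge[OF _ x]) (intro continuous_intros Qvc)
        moreover have "\<bar>Q (\<rho> j) (v j) x\<bar> \<le> supn (Q (\<rho> j) (v j))" by (rule supn_ge[OF Qvc(1) x])
        ultimately show "\<bar>v' x\<bar> \<le> supn (\<lambda>x. Q (\<rho> j) v' x - v' x) + supn (\<lambda>x. Q (\<rho> j) (v j) x - Q (\<rho> j) v' x) + supn (Q (\<rho> j) (v j))"
          by linarith
      qed
      then show ?thesis using b2 Qv[of j] by linarith
    qed
    have "(\<lambda>j. supn (\<lambda>x. Q (\<rho> j) v' x - v' x) + B0 * supn (\<lambda>x. v j x - v' x) + 1 / (real j + 1)) \<longlonglongrightarrow> 0 + B0 * 0 + 0"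
    proof (intro tendsto_add tendsto_mult cQ cv tendsto_const)
      have "(\<lambda>n. 1 / real (Suc n)) \<longlonglongrightarrow> 0" by (rule LIMSEQ_Suc) (rule lim_const_over_n)
      then show "(\<lambda>j. 1 / (real j + 1)) \<longlonglongrightarrow> 0" by (simp add: add.commute)
    qed
    then have lim0: "(\<lambda>j. supn (\<lambda>x. Q (\<rho> j) v' x - v' x) + B0 * supn (\<lambda>x. v j x - v' x) + 1 / (real j + 1)) \<longlonglongrightarrow> 0"
      by simp
    have "supn v' \<le> 0" by (rule LIMSEQ_le_const[OF lim0]) (use up in auto)
    then have sv0: "supn v' = 0" using supn_nonneg[OF v'c] by simp
    have \<psi>'0: "\<psi>' x = 0" if "x \<in> {0..1}" for x
      by (rule int_zero[OF \<psi>'c _ that]) (use supn_zero[OF v'c sv0] in \<open>simp add: v'_def\<close>)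
    have H0: "H x = 0" if "x \<in> {0<..1}" for x
    proof -
      have x: "x \<in> {0..1}" using that by auto
      have "G x * H x / (a1 x * a2 x) = 0" using \<psi>'0[OF x] by (simp add: \<psi>'_def)
      then show ?thesis using Gpos[OF that] nz(3,4)[OF x] by simp
    qed
    have "closed {x \<in> {0..1}. H x = 0}" by (rule continuous_closed_preimage_constant[OF Hc]) simp
    moreover have "{0<..1} \<subseteq> {x \<in> {0..1}. H x = 0}" using H0 by auto
    ultimately have "closure {0<..1::real} \<subseteq> {x \<in> {0..1}. H x = 0}" by (rule closure_minimal[rotated])
    then have H0': "H x = 0" if "x \<in> {0..1}" for x using that by auto
    have "1 \<le> supn (\<lambda>x. h (\<rho> j) x - H x)" for j
    proof -
      have "supn (h (\<rho> j)) \<le> supn (\<lambda>x. h (\<rho> j) x - H x)"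
        by (rule supn_mono) (auto simp: H0' intro!: continuous_intros hc Hc)
      then show ?thesis using hs by simp
    qed
    then have "1 \<le> (0::real)" by (intro LIMSEQ_le_const[OF c3]) auto
    then show False by simp
  qed
qed

end
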